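(* Let a discrete mean-field game (setting in the context) have reward $r(x,a,\mu)$ continuous in $\mu$. Run MF-PSRO(Nash): start with $\Pi_1=\{\pi_1\}$ for some $\pi_1\in\Pi$ and $\nu_1=\delta_{\pi_1}$; at step $n$, pick $\pi^{new}\in\arg\max_{\pi\in\Pi}J(\pi,\mu(\nu_n))$ and set $\Pi_{n+1}=\Pi_n\cup\{\pi^{new}\}$; if $\Pi_{n+1}=\Pi_n$ terminate, otherwise set $\nu_{n+1}\in\arg\min_{\nu\in\Delta(\Pi_{n+1})}\max_{\pi_i\in\Pi_{n+1}}\big(J(\pi_i,\mu(\nu))-J(\pi(\nu),\mu(\nu))\big)$ and continue. Then the algorithm terminates after finitely many steps, and the final $\nu_n$ yields a mean-field Nash equilibrium of the full game: $J(\pi,\mu(\nu_n))\le J(\pi(\nu_n),\mu(\nu_n))$ for all $\pi\in\Pi$.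
   Context: A discrete mean-field game consists of a finite state set $\mathcal X$, a finite action set $\mathcal A$, a reward $r:\mathcal X\times\mathcal A\times\Delta(\mathcal X)\to\mathbb R$, transition probabilities $p(x'\mid x,a)$ not depending on the population distribution, and an initial distribution $\mu_0\in\Delta(\mathcal X)$. A policy is a map $\pi:\mathcal X\to\Delta(\mathcal A)$; $\Pi$ is the finite set of deterministic policies. $\mu^\pi$ denotes the state occupancy measure of $\pi$ (either $\gamma$-discounted or finite-horizon with time in the state). The expected payoff is $J(\pi,\mu)=\sum_{x,a}\mu^\pi(x)\pi(x,a)r(x,a,\mu)$. For a distribution $\nu$ over a finite set of policies, $\mu(\nu)=\sum_\pi\nu(\pi)\mu^\pi$, and $\pi(\nu)$ is the policy that samples a policy from $\nu$ at the start and plays it throughout, so $J(\pi(\nu),\mu)=\sum_\pi\nu(\pi)J(\pi,\mu)$ and $\mu^{\pi(\nu)}=\mu(\nu)$. *)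

theory Defs
  imports "HOL-Analysis.Analysis"
begin

definition pdist :: "'b set \<Rightarrow> ('b \<Rightarrow> real) \<Rightarrow> bool" where
  "pdist S f \<longleftrightarrow> (\<forall>y. 0 \<le> f y) \<and> (\<forall>y. y \<notin> S \<longrightarrow> f y = 0) \<and> sum f S = 1"

text \<open>Standing assumptions on the game data: transition kernel p(x'|x,a) = p x a x',
  initial distribution mu0, discount factor gamma in [0,1).\<close>
definition mfg_data :: "('x::finite \<Rightarrow> 'a::finite \<Rightarrow> 'x \<Rightarrow> real) \<Rightarrow> ('x \<Rightarrow> real) \<Rightarrow> real \<Rightarrow> bool" where
  "mfg_data p mu0 gamma \<longleftrightarrow> (\<forall>x a. pdist UNIV (p x a)) \<and> pdist UNIV mu0 \<and> 0 \<le> gamma \<and> gamma < 1"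

primrec state_dist :: "('x::finite \<Rightarrow> 'a::finite \<Rightarrow> 'x \<Rightarrow> real) \<Rightarrow> ('x \<Rightarrow> real) \<Rightarrow> ('x \<Rightarrow> 'a) \<Rightarrow> nat \<Rightarrow> 'x \<Rightarrow> real" where
  "state_dist p mu0 pol 0 = mu0"
| "state_dist p mu0 pol (Suc t) = (\<lambda>x'. \<Sum>x\<in>UNIV. state_dist p mu0 pol t x * p x (pol x) x')"

definition occ :: "('x::finite \<Rightarrow> 'a::finite \<Rightarrow> 'x \<Rightarrow> real) \<Rightarrow> ('x \<Rightarrow> real) \<Rightarrow> real \<Rightarrow> ('x \<Rightarrow> 'a) \<Rightarrow> 'x \<Rightarrow> real" where
  "occ p mu0 gamma pol x = (1 - gamma) * (\<Sum>t. gamma ^ t * state_dist p mu0 pol t x)"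

definition mix_occ :: "('x::finite \<Rightarrow> 'a::finite \<Rightarrow> 'x \<Rightarrow> real) \<Rightarrow> ('x \<Rightarrow> real) \<Rightarrow> real \<Rightarrow> (('x \<Rightarrow> 'a) \<Rightarrow> real) \<Rightarrow> 'x \<Rightarrow> real" where
  "mix_occ p mu0 gamma nu x = (\<Sum>pol\<in>UNIV. nu pol * occ p mu0 gamma pol x)"

text \<open>J(pi, mu) for a deterministic policy pi (pi(x,a) = [pi x = a]).\<close>
definition payoff :: "('x::finite \<Rightarrow> 'a::finite \<Rightarrow> 'x \<Rightarrow> real) \<Rightarrow> ('x \<Rightarrow> real) \<Rightarrow> real \<Rightarrow> ('x \<Rightarrow> 'a \<Rightarrow> ('x \<Rightarrow> real) \<Rightarrow> real) \<Rightarrow> ('x \<Rightarrow> 'a) \<Rightarrow> ('x \<Rightarrow> real) \<Rightarrow> real" where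
  "payoff p mu0 gamma r pol mu = (\<Sum>x\<in>UNIV. \<Sum>a\<in>UNIV. occ p mu0 gamma pol x * (if pol x = a then 1 else 0) * r x a mu)"

definition payoff_mix :: "('x::finite \<Rightarrow> 'a::finite \<Rightarrow> 'x \<Rightarrow> real) \<Rightarrow> ('x \<Rightarrow> real) \<Rightarrow> real \<Rightarrow> ('x \<Rightarrow> 'a \<Rightarrow> ('x \<Rightarrow> real) \<Rightarrow> real) \<Rightarrow> (('x \<Rightarrow> 'a) \<Rightarrow> real) \<Rightarrow> ('x \<Rightarrow> real) \<Rightarrow> real" where
  "payoff_mix p mu0 gamma r nu mu = (\<Sum>pol\<in>UNIV. nu pol * payoff p mu0 gamma r pol mu)"

definition exploit :: "('x::finite \<Rightarrow> 'a::finite \<Rightarrow> 'x \<Rightarrow> real) \<Rightarrow> ('x \<Rightarrow> real) \<Rightarrow> real \<Rightarrow> ('x \<Rightarrow> 'a \<Rightarrow> ('x \<Rightarrow> real) \<Rightarrow> real) \<Rightarrow> ('x \<Rightarrow> 'a) set \<Rightarrow> (('x \<Rightarrow> 'a) \<Rightarrow> real) \<Rightarrow> real" where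
  "exploit p mu0 gamma r S nu =
     Max ((\<lambda>pol. payoff p mu0 gamma r pol (mix_occ p mu0 gamma nu)
                 - payoff_mix p mu0 gamma r nu (mix_occ p mu0 gamma nu)) ` S)"

end

theory Submission
  imports Defs
begin

lemma sd_props:
  assumes "mfg_data p mu0 gamma"
  shows "(\<forall>x. 0 \<le> state_dist p mu0 pol t x) \<and> (\<Sum>x\<in>UNIV. state_dist p mu0 pol t x) = 1"
proof (induction t)
  case 0
  then show ?case using assms by (simp add: mfg_data_def pdist_def)
next
  case (Suc t)
  have pd: "\<And>x a. (\<forall>y. 0 \<le> p x a y) \<and> sum (p x a) UNIV = 1"
    using assms by (simp add: mfg_data_def pdist_def)
  have "(\<Sum>x'\<in>UNIV. \<Sum>x\<in>UNIV. state_dist p mu0 pol t x * p x (pol x) x')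
      = (\<Sum>x\<in>UNIV. state_dist p mu0 pol t x * (\<Sum>x'\<in>UNIV. p x (pol x) x'))"
    by (subst sum.swap) (simp add: sum_distrib_left)
  also have "\<dots> = 1" using Suc pd by simp
  finally show ?case using Suc pd by (auto intro!: sum_nonneg)
qed

lemma sd_le1:
  assumes "mfg_data p mu0 gamma"
  shows "state_dist p mu0 pol t x \<le> 1"
proof -
  have "state_dist p mu0 pol t x \<le> (\<Sum>x\<in>UNIV. state_dist p mu0 pol t x)"
    using sd_props[OF assms] by (intro member_le_sum) auto
  then show ?thesis using sd_props[OF assms] by simp
qed

lemma sd_summable:
  assumes "mfg_data p mu0 gamma"
  shows "summable (\<lambda>t. gamma ^ t * state_dist p mu0 pol t x)"
proof (rule summable_comparison_test[where g = "\<lambda>t. gamma ^ t"])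
  have g: "0 \<le> gamma" "gamma < 1" using assms by (auto simp: mfg_data_def)
  show "\<exists>N. \<forall>n\<ge>N. norm (gamma ^ n * state_dist p mu0 pol n x) \<le> gamma ^ n"
    using g sd_props[OF assms] sd_le1[OF assms]
    by (auto simp: abs_mult intro!: mult_left_le)
  show "summable (\<lambda>t. gamma ^ t)" using g by (intro summable_geometric) auto
qed

lemma occ_props:
  assumes "mfg_data p mu0 gamma"
  shows "pdist UNIV (occ p mu0 gamma pol)"
proof -
  have g: "0 \<le> gamma" "gamma < 1" using assms by (auto simp: mfg_data_def)
  have nn: "0 \<le> occ p mu0 gamma pol x" for x
    unfolding occ_def using g sd_props[OF assms] sd_summable[OF assms]
    by (intro mult_nonneg_nonneg suminf_nonneg) auto
  have "(\<Sum>x\<in>UNIV. occ p mu0 gamma pol x)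
      = (1 - gamma) * (\<Sum>x\<in>UNIV. \<Sum>t. gamma ^ t * state_dist p mu0 pol t x)"
    by (simp add: occ_def sum_distrib_left)
  also have "(\<Sum>x\<in>UNIV. \<Sum>t. gamma ^ t * state_dist p mu0 pol t x)
       = (\<Sum>t. \<Sum>x\<in>UNIV. gamma ^ t * state_dist p mu0 pol t x)"
    by (rule suminf_sum[symmetric]) (rule sd_summable[OF assms])
  also have "\<dots> = (\<Sum>t. gamma ^ t)"
    using sd_props[OF assms] by (simp add: sum_distrib_left[symmetric])
  also have "\<dots> = 1 / (1 - gamma)" using g by (intro suminf_geometric) auto
  finally have "(\<Sum>x\<in>UNIV. occ p mu0 gamma pol x) = 1" using g by simp
  then show ?thesis using nn by (simp add: pdist_def)
qed

lemma mix_pdist: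
  assumes "mfg_data p mu0 gamma" "pdist S nu"
  shows "pdist UNIV (mix_occ p mu0 gamma nu)"
proof -
  have nu: "\<forall>y. 0 \<le> nu y" "\<forall>y. y \<notin> S \<longrightarrow> nu y = 0" "sum nu S = 1"
    using assms(2) by (auto simp: pdist_def)
  have o: "\<And>pol. (\<forall>y. 0 \<le> occ p mu0 gamma pol y) \<and> sum (occ p mu0 gamma pol) UNIV = 1"
    using occ_props[OF assms(1)] by (simp add: pdist_def)
  have "sum nu UNIV = sum nu S"
    using nu by (intro sum.mono_neutral_right) auto
  then have "(\<Sum>x\<in>UNIV. mix_occ p mu0 gamma nu x) = 1"
    unfolding mix_occ_def using o nu
    by (subst sum.swap) (simp add: sum_distrib_left[symmetric] mult.assoc)
  then show ?thesis using nu o unfolding pdist_def mix_occ_def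
    by (auto intro!: sum_nonneg)
qed

lemma nash_exist:
  fixes S :: "'i::finite set" and F :: "('i \<Rightarrow> real) \<Rightarrow> 'i \<Rightarrow> real"
  assumes Sne: "S \<noteq> {}"
    and contF: "\<And>i. continuous_on {nu. pdist S nu} (\<lambda>nu. F nu i)"
  shows "\<exists>nu. pdist S nu \<and> (\<forall>i\<in>S. F nu i \<le> (\<Sum>j\<in>S. nu j * F nu j))"
proof -
  define K where "K = {v :: real^'i. pdist S (vec_nth v)}"
  define A where "A = (\<lambda>v::real^'i. \<Sum>j\<in>S. v$j * F (vec_nth v) j)"
  define g where "g = (\<lambda>v i. if i \<in> S then max 0 (F (vec_nth v) i - A v) else 0)"
  define G where "G = (\<lambda>v. \<Sum>j\<in>S. g v j)"
  define T where "T = (\<lambda>v. \<chi> i. (v$i + g v i) / (1 + G v))"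
  have gnn: "0 \<le> g v i" for v i by (simp add: g_def)
  have Gnn: "0 \<le> G v" for v unfolding G_def by (intro sum_nonneg gnn)
  have Kc: "v \<in> K \<longleftrightarrow> (\<forall>i. 0 \<le> v$i) \<and> (\<forall>i. i \<notin> S \<longrightarrow> v$i = 0) \<and> (\<Sum>i\<in>S. v$i) = 1" for v
    by (simp add: K_def pdist_def)
  have closedK: "closed K"
  proof -
    have "K = (\<Inter>i. {v. 0 \<le> v$i}) \<inter> (\<Inter>i\<in>-S. {v. v$i = 0}) \<inter> {v. (\<Sum>i\<in>S. v$i) = 1}"
      by (auto simp: Kc)
    moreover have "closed {v::real^'i. 0 \<le> v$i}" for i
      by (intro closed_Collect_le continuous_intros)
    moreover have "closed {v::real^'i. v$i = 0}" for i
      by (intro closed_Collect_eq continuous_intros)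
    moreover have "closed {v::real^'i. (\<Sum>i\<in>S. v$i) = 1}"
      by (intro closed_Collect_eq continuous_intros)
    ultimately show ?thesis by (auto intro!: closed_Int closed_INT)
  qed
  have boundedK: "bounded K"
  proof -
    have "norm v \<le> 1" if "v \<in> K" for v
    proof -
      have "norm v \<le> (\<Sum>i\<in>UNIV. \<bar>v$i\<bar>)" by (rule norm_le_l1_cart)
      also have "\<dots> = (\<Sum>i\<in>UNIV. v$i)" using that by (simp add: Kc)
      also have "\<dots> = (\<Sum>i\<in>S. v$i)" using that
        by (intro sum.mono_neutral_right) (auto simp: Kc)
      finally show ?thesis using that by (simp add: Kc)
    qed
    then show ?thesis by (auto simp: bounded_iff)
  qed
  have compactK: "compact K" using closedK boundedK by (simp add: compact_eq_bounded_closed)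
  have convexK: "convex K"
    unfolding convex_def
  proof (intro ballI allI impI)
    fix x y u v assume xy: "x \<in> K" "y \<in> K" and uv: "0 \<le> (u::real)" "0 \<le> v" "u + v = 1"
    have "(\<Sum>i\<in>S. (u *\<^sub>R x + v *\<^sub>R y)$i) = u * (\<Sum>i\<in>S. x$i) + v * (\<Sum>i\<in>S. y$i)"
      by (simp add: sum.distrib sum_distrib_left)
    then show "u *\<^sub>R x + v *\<^sub>R y \<in> K" using xy uv by (auto simp: Kc)
  qed
  obtain i0 where i0: "i0 \<in> S" using Sne by blast
  have neK: "K \<noteq> {}"
  proof -
    have "(\<chi> i. if i = i0 then (1::real) else 0) \<in> K" using i0 by (simp add: Kc)
    then show ?thesis by blast
  qed
  have contnth: "continuous_on K (vec_nth :: real^'i \<Rightarrow> 'i \<Rightarrow> real)"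
    by (intro continuous_on_coordinatewise_then_product continuous_intros)
  have contFK: "continuous_on K (\<lambda>v. F (vec_nth v) i)" for i
    by (rule continuous_on_compose2[OF contF[of i] contnth]) (auto simp: K_def)
  have contA: "continuous_on K A" unfolding A_def
    by (intro continuous_intros contFK)
  have contg: "continuous_on K (\<lambda>v. g v i)" for i unfolding g_def
    by (cases "i \<in> S") (auto intro!: continuous_intros contFK contA)
  have contG: "continuous_on K G" unfolding G_def by (intro continuous_intros contg)
  have contT: "continuous_on K T" unfolding T_def
    using Gnn by (intro continuous_intros contg contG) (smt (verit))
  have fim: "T \<in> K \<rightarrow> K"
  proof
    fix v assume v: "v \<in> K"
    have d: "0 < 1 + G v" using Gnn[of v] by simp
    have "(\<Sum>i\<in>S. T v $ i) = (\<Sum>i\<in>S. v$i + g v i) / (1 + G v)"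
      by (simp add: T_def sum_divide_distrib)
    also have "\<dots> = 1" using v d by (simp add: sum.distrib Kc G_def)
    finally show "T v \<in> K" using v d gnn by (auto simp: Kc T_def g_def)
  qed
  obtain v where v: "v \<in> K" "T v = v"
    using brouwer[OF compactK convexK neK contT fim] by blast
  have d: "0 < 1 + G v" using Gnn[of v] by simp
  have fixeq: "v$i * G v = g v i" for i
  proof -
    have "v$i = (v$i + g v i) / (1 + G v)" using v(2)
      by (metis T_def vec_lambda_beta)
    then have "v$i * (1 + G v) = v$i + g v i" using d by (simp add: field_simps)
    then show ?thesis by (simp add: algebra_simps)
  qed
  have "\<exists>i\<in>S. 0 < v$i \<and> F (vec_nth v) i \<le> A v"
  proof (rule ccontr)
    assume "\<not> ?thesis"
    then have h: "\<forall>i\<in>S. 0 < v$i \<longrightarrow> A v < F (vec_nth v) i" by auto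
    have ex: "\<exists>i\<in>S. 0 < v$i"
    proof (rule ccontr)
      assume "\<not> ?thesis"
      then have "\<forall>i\<in>S. v$i = 0" using v(1) by (auto simp: Kc less_le)
      then show False using v(1) by (simp add: Kc)
    qed
    have "(\<Sum>i\<in>S. v$i * A v) < (\<Sum>i\<in>S. v$i * F (vec_nth v) i)"
    proof (rule sum_strict_mono_ex1)
      show "finite S" by simp
      show "\<forall>i\<in>S. v$i * A v \<le> v$i * F (vec_nth v) i"
      proof
        fix i assume i: "i \<in> S"
        show "v$i * A v \<le> v$i * F (vec_nth v) i"
        proof (cases "0 < v$i")
          case True
          then show ?thesis using h i by (intro mult_left_mono) auto
        next
          case False
          then have "v$i = 0" using v(1) by (simp add: Kc) (metis order.antisym not_less)
          then show ?thesis by simp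
        qed
      qed
      show "\<exists>i\<in>S. v$i * A v < v$i * F (vec_nth v) i"
        using h ex by (meson mult_strict_left_mono)
    qed
    moreover have "(\<Sum>i\<in>S. v$i * A v) = A v"
      using v(1) by (simp add: sum_distrib_right[symmetric] Kc)
    ultimately show False by (simp add: A_def)
  qed
  then obtain i where i: "i \<in> S" "0 < v$i" "F (vec_nth v) i \<le> A v" by blast
  have "g v i = 0" using i by (simp add: g_def)
  then have G0: "G v = 0" using fixeq[of i] i by simp
  have "\<forall>j\<in>S. g v j = 0"
    using G0 gnn unfolding G_def by (subst (asm) sum_nonneg_eq_0_iff) auto
  then have "\<forall>j\<in>S. F (vec_nth v) j \<le> A v" by (auto simp: g_def)
  then show ?thesis using v(1) by (auto simp: K_def A_def)
qed


lemma mix_cont: "continuous_on UNIV (mix_occ p mu0 gamma)"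
proof -
  have "continuous_on UNIV (\<lambda>nu. mix_occ p mu0 gamma nu x)" for x
    unfolding mix_occ_def
    by (intro continuous_on_sum continuous_on_mult_right continuous_on_product_coordinates)
  then show ?thesis by (intro continuous_on_coordinatewise_then_product) simp
qed

lemma payoff_cont:
  assumes game: "mfg_data p mu0 gamma"
    and cont: "\<forall>x a. continuous_on {mu. pdist UNIV mu} (r x a)"
  shows "continuous_on {nu. pdist S nu} (\<lambda>nu. payoff p mu0 gamma r i (mix_occ p mu0 gamma nu))"
proof -
  have "continuous_on {nu. pdist S nu} (\<lambda>nu. r x a (mix_occ p mu0 gamma nu))" for x a
    by (rule continuous_on_compose2[OF cont[rule_format, of x a] continuous_on_subset[OF mix_cont]])
      (auto intro: mix_pdist[OF game])
  then show ?thesis unfolding payoff_def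
    by (intro continuous_intros)
qed

lemma payoff_mix_eq:
  assumes "pdist S nu"
  shows "payoff_mix p mu0 gamma r nu mu = (\<Sum>j\<in>S. nu j * payoff p mu0 gamma r j mu)"
  unfolding payoff_mix_def using assms
  by (intro sum.mono_neutral_right) (auto simp: pdist_def)

lemma restricted_ne:
  assumes game: "mfg_data p mu0 gamma"
    and cont: "\<forall>x a. continuous_on {mu. pdist UNIV mu} (r x a)"
    and Sne: "S \<noteq> {}"
  shows "\<exists>nu. pdist S nu \<and> exploit p mu0 gamma r S nu \<le> 0"
proof -
  obtain nu where nu: "pdist S nu"
    "\<forall>i\<in>S. payoff p mu0 gamma r i (mix_occ p mu0 gamma nu)
       \<le> (\<Sum>j\<in>S. nu j * payoff p mu0 gamma r j (mix_occ p mu0 gamma nu))"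
  proof -
    have "\<exists>nu. pdist S nu \<and> (\<forall>i\<in>S. payoff p mu0 gamma r i (mix_occ p mu0 gamma nu)
       \<le> (\<Sum>j\<in>S. nu j * payoff p mu0 gamma r j (mix_occ p mu0 gamma nu)))"
      by (rule nash_exist[OF Sne]) (rule payoff_cont[OF game cont])
    then show ?thesis using that by blast
  qed
  have "exploit p mu0 gamma r S nu \<le> 0"
    unfolding exploit_def using nu Sne payoff_mix_eq[OF nu(1)]
    by (subst Max_le_iff) auto
  then show ?thesis using nu by blast
qed

lemma le_exploit:
  assumes "i \<in> S"
  shows "payoff p mu0 gamma r i (mix_occ p mu0 gamma nu) - payoff_mix p mu0 gamma r nu (mix_occ p mu0 gamma nu)
    \<le> exploit p mu0 gamma r S nu"
  unfolding exploit_def using assms by (intro Max_ge) auto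

theorem mainTheorem3:
  fixes p :: "'x::finite \<Rightarrow> 'a::finite \<Rightarrow> 'x \<Rightarrow> real"
    and mu0 :: "'x \<Rightarrow> real" and gamma :: real
    and r :: "'x \<Rightarrow> 'a \<Rightarrow> ('x \<Rightarrow> real) \<Rightarrow> real"
    and pi1 :: "'x \<Rightarrow> 'a"
    and P :: "nat \<Rightarrow> ('x \<Rightarrow> 'a) set"
    and nu :: "nat \<Rightarrow> ('x \<Rightarrow> 'a) \<Rightarrow> real"
    and pnew :: "nat \<Rightarrow> 'x \<Rightarrow> 'a"
  assumes game: "mfg_data p mu0 gamma"
    and cont: "\<forall>x a. continuous_on {mu. pdist UNIV mu} (r x a)"
    and init_P: "P 1 = {pi1}"
    and init_nu: "nu 1 = (\<lambda>pol. if pol = pi1 then 1 else 0)"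
    and step: "\<forall>n\<ge>1. (\<forall>m\<in>{1..<n}. P (Suc m) \<noteq> P m) \<longrightarrow>
       ((\<forall>pol. payoff p mu0 gamma r pol (mix_occ p mu0 gamma (nu n))
               \<le> payoff p mu0 gamma r (pnew n) (mix_occ p mu0 gamma (nu n)))
        \<and> P (Suc n) = insert (pnew n) (P n)
        \<and> (P (Suc n) \<noteq> P n \<longrightarrow>
             pdist (P (Suc n)) (nu (Suc n)) \<and>
             (\<forall>nu'. pdist (P (Suc n)) nu' \<longrightarrow>
                exploit p mu0 gamma r (P (Suc n)) (nu (Suc n))
                  \<le> exploit p mu0 gamma r (P (Suc n)) nu')))"
  shows "\<exists>N\<ge>1. (\<forall>m\<in>{1..<N}. P (Suc m) \<noteq> P m) \<and> P (Suc N) = P N \<and>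
           (\<forall>pol. payoff p mu0 gamma r pol (mix_occ p mu0 gamma (nu N))
                  \<le> payoff_mix p mu0 gamma r (nu N) (mix_occ p mu0 gamma (nu N)))"
proof -
  have ex: "\<exists>n. 1 \<le> n \<and> P (Suc n) = P n"
  proof (rule ccontr)
    assume "\<not> ?thesis"
    then have ne: "\<And>n. 1 \<le> n \<Longrightarrow> P (Suc n) \<noteq> P n" by blast
    have c: "card (P (Suc k)) = Suc k" for k
    proof (induction k)
      case 0
      then show ?case using init_P by simp
    next
      case (Suc k)
      have "P (Suc (Suc k)) = insert (pnew (Suc k)) (P (Suc k))"
        using step ne by auto
      moreover have "P (Suc (Suc k)) \<noteq> P (Suc k)" using ne by simp
      ultimately have "pnew (Suc k) \<notin> P (Suc k)" by auto
      then show ?case using Suc \<open>P (Suc (Suc k)) = _\<close> by simp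
    qed
    have "card (P (Suc CARD('x \<Rightarrow> 'a))) \<le> CARD('x \<Rightarrow> 'a)"
      by (rule card_mono) auto
    then show False using c by simp
  qed
  define N where "N = (LEAST n. 1 \<le> n \<and> P (Suc n) = P n)"
  have N: "1 \<le> N" "P (Suc N) = P N" using LeastI_ex[OF ex] unfolding N_def by auto
  have pre: "\<forall>m\<in>{1..<N}. P (Suc m) \<noteq> P m"
    using not_less_Least[where P = "\<lambda>n. 1 \<le> n \<and> P (Suc n) = P n"] unfolding N_def[symmetric]
    by auto
  have stN: "\<forall>pol. payoff p mu0 gamma r pol (mix_occ p mu0 gamma (nu N))
               \<le> payoff p mu0 gamma r (pnew N) (mix_occ p mu0 gamma (nu N))"
    "P (Suc N) = insert (pnew N) (P N)"
    using step N(1) pre by auto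
  have inN: "pnew N \<in> P N" using stN(2) N(2) by auto
  have eq: "\<forall>pol. payoff p mu0 gamma r pol (mix_occ p mu0 gamma (nu N))
                  \<le> payoff_mix p mu0 gamma r (nu N) (mix_occ p mu0 gamma (nu N))"
  proof (cases "N = 1")
    case True
    then have "pnew N = pi1" using inN init_P by simp
    moreover have "payoff_mix p mu0 gamma r (nu N) mu = payoff p mu0 gamma r pi1 mu" for mu
    proof -
      have "(\<Sum>pol\<in>UNIV. (if pol = pi1 then 1 else 0) * payoff p mu0 gamma r pol mu)
          = (\<Sum>pol\<in>UNIV. if pol = pi1 then payoff p mu0 gamma r pi1 mu else 0)"
        by (rule sum.cong) auto
      then show ?thesis using True init_nu unfolding payoff_mix_def by simp
    qed
    ultimately show ?thesis using stN(1) by simp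
  next
    case False
    then obtain n where n: "N = Suc n" "1 \<le> n" using N(1) by (cases N) auto
    have pren: "\<forall>m\<in>{1..<n}. P (Suc m) \<noteq> P m" using pre n by auto
    have "P (Suc n) \<noteq> P n" using pre n by auto
    moreover have "P (Suc n) \<noteq> P n \<longrightarrow> pdist (P (Suc n)) (nu (Suc n)) \<and>
             (\<forall>nu'. pdist (P (Suc n)) nu' \<longrightarrow>
                exploit p mu0 gamma r (P (Suc n)) (nu (Suc n))
                  \<le> exploit p mu0 gamma r (P (Suc n)) nu')"
      using step n(2) pren by blast
    ultimately have mn: "pdist (P N) (nu N)"
      "\<forall>nu'. pdist (P N) nu' \<longrightarrow> exploit p mu0 gamma r (P N) (nu N) \<le> exploit p mu0 gamma r (P N) nu'"
      unfolding n(1) by auto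
    obtain nu' where "pdist (P N) nu'" "exploit p mu0 gamma r (P N) nu' \<le> 0"
      using restricted_ne[OF game cont, of "P N"] inN by blast
    then have "exploit p mu0 gamma r (P N) (nu N) \<le> 0" using mn by force
    then show ?thesis using le_exploit[OF inN, of p mu0 gamma r "nu N"] stN(1)
      by (smt (verit))
  qed
  show ?thesis using N pre eq by blast
qed

end
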